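(* For each $j=1,\dots,m$ there exists $A_j>0$ such that for all $t>0$ and all $N\ge1$, \[\frac{a_j^N(NX_N(t))}{N}\le A_j\quad\text{a.s.}\]
   Context: Fix integers $n,m\ge1$, vectors $\nu_1,\dots,\nu_m\in\mathbb{Z}^n$ and $c=(c_1,\dots,c_m)$ with all $c_j>0$; $|\cdot|$ is a fixed norm. For each $N\ge1$ and $j$, $a_j^N(x)=c_jb_j^N(x)$ with $b_j^N:\mathbb{R}^n\to\mathbb{R}$ nonnegative on $\mathbb{Z}_+^n$. Standing assumptions: (i) for each $j$ and $x\in\mathbb{R}_+^n$ the limit $a_j(x)=\lim_Na_j^N(Nx)/N$ exists, and for each compact $K\subset\mathbb{R}_+^n$ there is $B_K>0$ with $|a_j^N(Nx)/N-a_j(x)|\le B_K/N$ for $x\in K$, $N\ge1$, all $j$; (ii) each $a_j$ is continuously differentiable on $\mathbb{R}^n$; (iii) $x_0\in\mathbb{R}_+^n$ is fixed, $N$ ranges over positive integers with $Nx_0\in\mathbb{Z}_+^n$, and on a probability space with independent unit-rate Poisson processes $Y_1,\dots,Y_m$, $X^N$ solves $X^N(t)=Nx_0+\sum_jY_j\big(\int_0^ta_j^N(X^N(s))ds\big)\nu_j$; (iv) with $X_N(t)=X^N(t)/N$, there is $\Gamma$ with $|X_N(t)|\le\Gamma$ a.s. for all $t\ge0$, $N$. *)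

theory Defs
  imports "HOL-Analysis.Analysis" "HOL-Probability.Probability"
begin

definition Rplus :: "(real^'n) set" where
  "Rplus = {x. \<forall>i. 0 \<le> x $ i}"

definition Zplus :: "(real^'n) set" where
  "Zplus = {x. \<forall>i. x $ i \<in> \<int> \<and> 0 \<le> x $ i}"

definition Zvec :: "(real^'n) set" where
  "Zvec = {x. \<forall>i. x $ i \<in> \<int>}"

definition is_norm :: "(real^'n \<Rightarrow> real) \<Rightarrow> bool" where
  "is_norm nrm \<longleftrightarrow> (\<forall>x. 0 \<le> nrm x) \<and> (\<forall>x. nrm x = 0 \<longleftrightarrow> x = 0)
     \<and> (\<forall>r x. nrm (r *\<^sub>R x) = \<bar>r\<bar> * nrm x) \<and> (\<forall>x y. nrm (x + y) \<le> nrm x + nrm y)"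

definition C1_on_UNIV :: "(real^'n \<Rightarrow> real) \<Rightarrow> bool" where
  "C1_on_UNIV f \<longleftrightarrow> (\<exists>D :: (real^'n) \<Rightarrow> ((real^'n) \<Rightarrow>\<^sub>L real).
      (\<forall>x. (f has_derivative blinfun_apply (D x)) (at x)) \<and> continuous_on UNIV D)"

definition unit_poisson_process :: "'a measure \<Rightarrow> (real \<Rightarrow> 'a \<Rightarrow> nat) \<Rightarrow> bool" where
  "unit_poisson_process M Y \<longleftrightarrow>
     (\<forall>t. Y t \<in> measurable M (count_space UNIV)) \<and>
     (AE \<omega> in M. Y 0 \<omega> = 0 \<and> mono_on {0..} (\<lambda>t. Y t \<omega>) \<and>
        (\<forall>t\<ge>0. continuous (at_right t) (\<lambda>s. real (Y s \<omega>)))) \<and>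
     (\<forall>s t. 0 \<le> s \<and> s < t \<longrightarrow>
        distr M (count_space UNIV) (\<lambda>\<omega>. Y t \<omega> - Y s \<omega>) = measure_pmf (poisson_pmf (t - s))) \<and>
     (\<forall>ts :: real list. sorted ts \<and> ts \<noteq> [] \<and> 0 \<le> hd ts \<longrightarrow>
        prob_space.indep_vars M (\<lambda>_. count_space UNIV) (\<lambda>i \<omega>. Y (ts ! Suc i) \<omega> - Y (ts ! i) \<omega>)
          {..<length ts - 1})"

end

theory Submission
  imports Defs
begin

lemma nrm_sum:
  assumes "is_norm nrm" "finite S"
  shows "nrm (\<Sum>i\<in>S. f i) \<le> (\<Sum>i\<in>S. nrm (f i))"
  using assms(2)
proof (induction S rule: finite_induct)
  case empty
  then show ?case using assms(1) unfolding is_norm_def by (metis order_refl sum.empty)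
next
  case (insert x F)
  then show ?case using assms(1) unfolding is_norm_def
    by (simp add: sum.insert) (smt (verit))
qed

lemma nrm_upper:
  assumes "is_norm nrm"
  shows "\<exists>C. \<forall>x::real^'n. nrm x \<le> C * norm x"
proof -
  have "nrm x \<le> (\<Sum>b\<in>Basis. nrm b) * norm x" for x :: "real^'n"
  proof -
    have "nrm x = nrm (\<Sum>b\<in>Basis. (x \<bullet> b) *\<^sub>R b)" by (simp add: euclidean_representation)
    also have "\<dots> \<le> (\<Sum>b\<in>Basis. nrm ((x \<bullet> b) *\<^sub>R b))" by (rule nrm_sum[OF assms]) simp
    also have "\<dots> = (\<Sum>b\<in>Basis. \<bar>x \<bullet> b\<bar> * nrm b)" using assms unfolding is_norm_def by simp
    also have "\<dots> \<le> (\<Sum>b\<in>Basis. norm x * nrm b)"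
      apply (rule sum_mono) apply (rule mult_right_mono)
      using Basis_le_norm assms unfolding is_norm_def by auto
    finally show ?thesis by (simp add: sum_distrib_left mult.commute)
  qed
  then show ?thesis by blast
qed

lemma nrm_cont:
  assumes "is_norm nrm"
  shows "continuous_on UNIV (nrm :: real^'n \<Rightarrow> real)"
proof -
  obtain C where C: "\<forall>x::real^'n. nrm x \<le> C * norm x" using nrm_upper[OF assms] by blast
  have tri: "\<bar>nrm x - nrm y\<bar> \<le> nrm (x - y)" for x y :: "real^'n"
  proof -
    have "nrm x \<le> nrm (x - y) + nrm y" using assms unfolding is_norm_def
      by (metis diff_add_cancel)
    moreover have "nrm y \<le> nrm (y - x) + nrm x" using assms unfolding is_norm_def
      by (metis diff_add_cancel)
    moreover have "nrm (y - x) = nrm (x - y)" using assms unfolding is_norm_def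
      by (metis abs_minus_cancel abs_one minus_diff_eq mult_1 scaleR_minus1_left)
    ultimately show ?thesis by linarith
  qed
  show ?thesis unfolding continuous_on_iff
  proof (intro ballI allI impI)
    fix x :: "real^'n" and e :: real assume e: "e > 0"
    define d where "d = e / (\<bar>C\<bar> + 1)"
    have d: "d > 0" using e by (simp add: d_def)
    show "\<exists>d>0. \<forall>x'\<in>UNIV. dist x' x < d \<longrightarrow> dist (nrm x') (nrm x) < e"
    proof (intro exI[of _ d] conjI ballI impI d)
      fix y :: "real^'n" assume "dist y x < d"
      then have n: "norm (y - x) < d" by (simp add: dist_norm)
      have "dist (nrm y) (nrm x) \<le> nrm (y - x)" using tri by (simp add: dist_real_def)
      also have "\<dots> \<le> C * norm (y - x)" using C by blast
      also have "\<dots> \<le> (\<bar>C\<bar> + 1) * norm (y - x)" by (simp add: mult_right_mono)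
      also have "\<dots> < (\<bar>C\<bar> + 1) * d" using n by (intro mult_strict_left_mono) auto
      also have "\<dots> = e" unfolding d_def by simp
      finally show "dist (nrm y) (nrm x) < e" .
    qed
  qed
qed

lemma nrm_lower:
  assumes "is_norm nrm"
  shows "\<exists>\<mu>>0. \<forall>x::real^'n. \<mu> * norm x \<le> nrm x"
proof -
  have cs: "compact (sphere (0::real^'n) 1)" by simp
  have ne: "sphere (0::real^'n) 1 \<noteq> {}"
    using vector_choose_size[of 1] by (auto simp: sphere_def)
  obtain z where z: "z \<in> sphere 0 1" and zmin: "\<forall>y\<in>sphere 0 1. nrm z \<le> nrm y"
    using continuous_attains_inf[OF cs ne continuous_on_subset[OF nrm_cont[OF assms]]] by blast
  have "z \<noteq> 0" using z by auto
  then have pos: "nrm z > 0" using assms unfolding is_norm_def by (metis less_eq_real_def)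
  have "nrm z * norm x \<le> nrm x" for x :: "real^'n"
  proof (cases "x = 0")
    case True then show ?thesis using assms unfolding is_norm_def by simp
  next
    case False
    then have "(1/norm x) *\<^sub>R x \<in> sphere 0 1" by simp
    then have "nrm z \<le> nrm ((1/norm x) *\<^sub>R x)" using zmin by blast
    also have "\<dots> = nrm x / norm x" using assms unfolding is_norm_def by simp
    finally show ?thesis using False by (simp add: field_simps)
  qed
  then show ?thesis using pos by blast
qed

theorem lemma3p1:
  fixes m :: nat
    and \<nu> :: "nat \<Rightarrow> real^'n"
    and c :: "nat \<Rightarrow> real"
    and b aN :: "nat \<Rightarrow> nat \<Rightarrow> real^'n \<Rightarrow> real"
    and a :: "nat \<Rightarrow> real^'n \<Rightarrow> real"
    and nrm :: "real^'n \<Rightarrow> real"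
    and x0 :: "real^'n"
    and M :: "'a measure"
    and Y :: "nat \<Rightarrow> real \<Rightarrow> 'a \<Rightarrow> nat"
    and X :: "nat \<Rightarrow> real \<Rightarrow> 'a \<Rightarrow> real^'n"
    and \<Gamma> :: real
  assumes m_pos: "m \<ge> 1"
    and nu_int: "\<forall>j<m. \<nu> j \<in> Zvec"
    and c_pos: "\<forall>j<m. c j > 0"
    and aN_def: "\<forall>N j x. aN N j x = c j * b N j x"
    and b_nonneg: "\<forall>N\<ge>1. \<forall>j<m. \<forall>x\<in>Zplus. 0 \<le> b N j x"
    and norm: "is_norm nrm"
    and lim: "\<forall>j<m. \<forall>x\<in>Rplus.
               (\<lambda>N. aN N j (real N *\<^sub>R x) / real N) \<longlonglongrightarrow> a j x"
    and rate: "\<forall>K. compact K \<and> K \<subseteq> Rplus \<longrightarrow> (\<exists>B>0. \<forall>x\<in>K. \<forall>N\<ge>1. \<forall>j<m.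
               \<bar>aN N j (real N *\<^sub>R x) / real N - a j x\<bar> \<le> B / real N)"
    and C1: "\<forall>j<m. C1_on_UNIV (a j)"
    and x0: "x0 \<in> Rplus"
    and prob: "prob_space M"
    and poisson: "\<forall>j<m. unit_poisson_process M (Y j)"
    and indep: "prob_space.indep_vars M (\<lambda>_. Pi\<^sub>M UNIV (\<lambda>_::real. count_space (UNIV :: nat set)))
                  (\<lambda>j \<omega> t. Y j t \<omega>) {..<m}"
    and eqn: "\<forall>N\<ge>1. real N *\<^sub>R x0 \<in> Zplus \<longrightarrow>
               (AE \<omega> in M. \<forall>t\<ge>0. X N t \<omega> = real N *\<^sub>R x0 +
                  (\<Sum>j<m. real (Y j (integral {0..t} (\<lambda>s. aN N j (X N s \<omega>))) \<omega>) *\<^sub>R \<nu> j))"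
    and state: "\<forall>N\<ge>1. real N *\<^sub>R x0 \<in> Zplus \<longrightarrow> (\<forall>t\<ge>0. AE \<omega> in M. X N t \<omega> \<in> Zplus)"
    and bounded: "\<forall>N\<ge>1. real N *\<^sub>R x0 \<in> Zplus \<longrightarrow>
               (\<forall>t\<ge>0. AE \<omega> in M. nrm ((1 / real N) *\<^sub>R X N t \<omega>) \<le> \<Gamma>)"
  shows "\<forall>j<m. \<exists>A>0. \<forall>t>0. \<forall>N\<ge>1. real N *\<^sub>R x0 \<in> Zplus \<longrightarrow>
           (AE \<omega> in M. aN N j (real N *\<^sub>R ((1 / real N) *\<^sub>R X N t \<omega>)) / real N \<le> A)"
  proof (intro allI impI)
  fix j assume j: "j < m"
  define K where "K = {x::real^'n. x \<in> Rplus \<and> nrm x \<le> \<Gamma>}"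
  have clR: "closed (Rplus :: (real^'n) set)"
  proof -
    have "Rplus = (\<Inter>i. {x::real^'n. 0 \<le> x $ i})" unfolding Rplus_def by auto
    moreover have "closed {x::real^'n. 0 \<le> x $ i}" for i
      by (intro closed_Collect_le continuous_intros)
    ultimately show ?thesis by (metis closed_INT)
  qed
  have clN: "closed {x::real^'n. nrm x \<le> \<Gamma>}"
    by (rule closed_Collect_le[OF nrm_cont[OF norm] continuous_on_const])
  have clK: "closed K" unfolding K_def using closed_Int[OF clR clN] by (simp add: Int_def)
  obtain \<mu> where mu: "\<mu> > 0" "\<forall>x::real^'n. \<mu> * norm x \<le> nrm x" using nrm_lower[OF norm] by blast
  have bK: "bounded K" unfolding bounded_iff
  proof (intro exI ballI)
    fix x assume "x \<in> K"
    then have "\<mu> * norm x \<le> \<Gamma>" using mu(2)[rule_format, of x] unfolding K_def by auto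
    then show "norm x \<le> \<Gamma> / \<mu>" using mu by (simp add: field_simps mult.commute)
  qed
  have cK: "compact K" using clK bK by (simp add: compact_eq_bounded_closed)
  have KR: "K \<subseteq> Rplus" unfolding K_def by auto
  obtain B where B: "B > 0" "\<forall>x\<in>K. \<forall>N\<ge>1. \<forall>j<m.
               \<bar>aN N j (real N *\<^sub>R x) / real N - a j x\<bar> \<le> B / real N"
    using rate cK KR by blast
  have ca: "continuous_on K (a j)"
  proof -
    obtain D where "\<forall>x. (a j has_derivative blinfun_apply (D x)) (at x)"
      using C1 j unfolding C1_on_UNIV_def by blast
    then have "\<forall>x. isCont (a j) x" using has_derivative_continuous by blast
    then show ?thesis by (simp add: continuous_at_imp_continuous_on)
  qed
  have "bounded (a j ` K)" using compact_continuous_image[OF ca cK] compact_imp_bounded by blast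
  then obtain C where C: "C > 0" "\<forall>y\<in>a j ` K. norm y \<le> C" unfolding bounded_pos by blast
  show "\<exists>A>0. \<forall>t>0. \<forall>N\<ge>1. real N *\<^sub>R x0 \<in> Zplus \<longrightarrow>
           (AE \<omega> in M. aN N j (real N *\<^sub>R ((1 / real N) *\<^sub>R X N t \<omega>)) / real N \<le> A)"
  proof (intro exI[of _ "C + B"] conjI allI impI)
    show "C + B > 0" using B C by simp
    fix t :: real and N :: nat assume t: "t > 0" and N: "N \<ge> 1" and z: "real N *\<^sub>R x0 \<in> Zplus"
    have e1: "AE \<omega> in M. X N t \<omega> \<in> Zplus" using state N z t by auto
    have e2: "AE \<omega> in M. nrm ((1 / real N) *\<^sub>R X N t \<omega>) \<le> \<Gamma>" using bounded N z t by auto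
    show "AE \<omega> in M. aN N j (real N *\<^sub>R ((1 / real N) *\<^sub>R X N t \<omega>)) / real N \<le> C + B"
      using e1 e2
    proof eventually_elim
      case (elim \<omega>)
      define x where "x = (1 / real N) *\<^sub>R X N t \<omega>"
      have "x \<in> Rplus" using elim(1) N unfolding x_def Zplus_def Rplus_def by auto
      then have xK: "x \<in> K" using elim(2) unfolding K_def x_def by auto
      have "\<bar>aN N j (real N *\<^sub>R x) / real N - a j x\<bar> \<le> B / real N" using B xK N j by blast
      moreover have "B / real N \<le> B" using B N by (simp add: field_simps)
      moreover have "a j x \<le> C" using C xK by force
      ultimately show ?case unfolding x_def by linarith
    qed
  qed
qed

end
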